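(* Regarded as a subset of $\mathbb{RP}^1\times\mathbb{RP}^2$, the space of half-flat structures, namely $\{([x_1u_1+x_2u_2],[y_1u_1^2+y_2u_1u_2+y_3u_2^2])\colon x_1y_2+x_2(y_1-y_3)=0\}$, is (via projection onto the second factor) the blow-up of $\mathbb{RP}^2$ at $[1:0:1]$. In particular, it is connected. The points projecting onto $[1:0:1]$ correspond to Hermitian structures on $\mathfrak{so}(3,\mathbb C)$.
   Context: A pair $([\mathbf x],[\mathbf y])\in\mathbb{RP}^1\times\mathbb{RP}^2$ with $\mathbf x=x_1u_1+x_2u_2$, $\mathbf y=y_1u_1^2+y_2u_1u_2+y_3u_2^2$ determines the Lie algebra with basis $e^1,\dots,e^6$ of its dual satisfying ($e^{ij}=e^i\wedge e^j$) $de^1=(x_2y_1-x_1y_2)e^{35}-x_1y_3(e^{36}+e^{45})-x_2y_3e^{46}$, $de^3=-(x_2y_1-x_1y_2)e^{15}+x_1y_3(e^{16}+e^{25})+x_2y_3e^{26}$, $de^5=(x_2y_1-x_1y_2)e^{13}-x_1y_3(e^{14}+e^{23})-x_2y_3e^{24}$, $de^2=x_1y_1e^{35}-(x_1y_3-y_2x_2)e^{46}+x_2y_1(e^{36}+e^{45})$, $de^4=-x_1y_1e^{15}+(x_1y_3-y_2x_2)e^{26}-x_2y_1(e^{16}+e^{25})$, $de^6=x_1y_1e^{13}-(x_1y_3-y_2x_2)e^{24}+x_2y_1(e^{14}+e^{23})$, together with the left-invariant $SO(3)$-structure and $SU(3)$-structure defined by the coframe: $\sigma=e^{12}+e^{34}+e^{56}$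 and $\gamma=\tfrac43(\eta_0+\eta_1+\eta_2)$, where $\eta_j=\eta^{\theta_j}$, $\theta_j\in\{0,2\pi/3,-2\pi/3\}$, $\eta^\theta=(\cos\theta\, e^1+\sin\theta\, e^2)\wedge(\cos\theta\, e^3+\sin\theta\, e^4)\wedge(\cos\theta\, e^5+\sin\theta\, e^6)$; $\hat\gamma=J\gamma$. Its intrinsic torsion parameters are $\lambda_1=x_1y_1$, $\lambda_2=x_1y_2+x_2y_1$, $\lambda_3=x_1y_3+x_2y_2$, $\lambda_4=x_2y_3$ (with $d\hat\gamma=\tfrac12(\lambda_3-\lambda_1)\sigma^2$ and $d\sigma=\tfrac34(\lambda_1-\lambda_3)\gamma+\tfrac34(\lambda_2-\lambda_4)\hat\gamma+\beta$, $\beta$ a form of type $W_3$). The $SU(3)$-structure is half-flat if $d(\sigma^2)=0$ and $d\gamma=0$, which here means $\lambda_2=\lambda_4$; it is Hermitian if moreover $\lambda_1=\lambda_3$. *)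

theory Defs
  imports "HOL-Analysis.Analysis"
begin

text \<open>A point [v] of RP^(n-1) (v a nonzero vector of real^'n) is represented by the
  orthogonal projection onto the line spanned by v, i.e. the matrix v v^T / (v . v).
  This is the standard embedding of projective space into symmetric matrices; it is
  injective on projective classes and a homeomorphism onto its image, so the subspace
  topology of real^'n^'n gives the usual topology of RP^(n-1).\<close>

definition pt :: "real^'n \<Rightarrow> real^'n^'n" where
  "pt v = (\<chi> i j. v$i * v$j / (v \<bullet> v))"

text \<open>x = x1 u1 + x2 u2 (x$1 = x1, x$2 = x2), y = y1 u1^2 + y2 u1 u2 + y3 u2^2.\<close>

definition lam1 :: "real^2 \<Rightarrow> real^3 \<Rightarrow> real" where
  "lam1 x y = x$1 * y$1"
definition lam2 :: "real^2 \<Rightarrow> real^3 \<Rightarrow> real" where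
  "lam2 x y = x$1 * y$2 + x$2 * y$1"
definition lam3 :: "real^2 \<Rightarrow> real^3 \<Rightarrow> real" where
  "lam3 x y = x$1 * y$3 + x$2 * y$2"
definition lam4 :: "real^2 \<Rightarrow> real^3 \<Rightarrow> real" where
  "lam4 x y = x$2 * y$3"

definition hermitian :: "real^2 \<Rightarrow> real^3 \<Rightarrow> bool" where
  "hermitian x y \<longleftrightarrow> lam2 x y = lam4 x y \<and> lam1 x y = lam3 x y"

definition halfflat_set :: "((real^2^2) \<times> (real^3^3)) set" where
  "halfflat_set = {(pt x, pt y) | x y. x \<noteq> 0 \<and> y \<noteq> 0 \<and>
                     x$1 * y$2 + x$2 * (y$1 - y$3) = 0}"

text \<open>Bl_p(RP^2) = {(l, q) : l a projective line through [p], q a point of l}, with the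
  blow-down map being the second projection. A projective line in RP^2 is the
  projectivisation of a plane n^perp, represented by the point [n] of the dual RP^2.\<close>

definition blowup :: "real^3 \<Rightarrow> ((real^3^3) \<times> (real^3^3)) set" where
  "blowup p = {(pt n, pt q) | n q. n \<noteq> 0 \<and> q \<noteq> 0 \<and> n \<bullet> p = 0 \<and> n \<bullet> q = 0}"

text \<open>Vectors of the Lie algebra are elements of real^6 in the basis e_1..e_6 dual to
  e^1..e^6 (component Z$k = e^k(Z)). e^{ij}(X,Y) = X_i Y_j - X_j Y_i.\<close>

definition w2 :: "real^6 \<Rightarrow> real^6 \<Rightarrow> 6 \<Rightarrow> 6 \<Rightarrow> real" where
  "w2 X Y i j = X$i * Y$j - X$j * Y$i"

definition dE :: "real^2 \<Rightarrow> real^3 \<Rightarrow> real^6 \<Rightarrow> real^6 \<Rightarrow> real^6" where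
  "dE x y X Y = (let x1 = x$1; x2 = x$2; y1 = y$1; y2 = y$2; y3 = y$3; e = w2 X Y in
     (\<chi> k.
       if k = 1 then (x2*y1 - x1*y2) * e 3 5 - x1*y3 * (e 3 6 + e 4 5) - x2*y3 * e 4 6
       else if k = 3 then - (x2*y1 - x1*y2) * e 1 5 + x1*y3 * (e 1 6 + e 2 5) + x2*y3 * e 2 6
       else if k = 5 then (x2*y1 - x1*y2) * e 1 3 - x1*y3 * (e 1 4 + e 2 3) - x2*y3 * e 2 4
       else if k = 2 then x1*y1 * e 3 5 - (x1*y3 - y2*x2) * e 4 6 + x2*y1 * (e 3 6 + e 4 5)
       else if k = 4 then - x1*y1 * e 1 5 + (x1*y3 - y2*x2) * e 2 6 - x2*y1 * (e 1 6 + e 2 5)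
       else x1*y1 * e 1 3 - (x1*y3 - y2*x2) * e 2 4 + x2*y1 * (e 1 4 + e 2 3)))"

text \<open>Lie bracket via the convention de(X,Y) = - e([X,Y]).\<close>
definition lie_bracket :: "real^2 \<Rightarrow> real^3 \<Rightarrow> real^6 \<Rightarrow> real^6 \<Rightarrow> real^6" where
  "lie_bracket x y X Y = - dE x y X Y"

text \<open>so(3,C), regarded as a real Lie algebra: complex skew-symmetric 3x3 matrices
  with the commutator bracket. The Lie algebra of (x,y) is isomorphic to it.\<close>
definition iso_so3C :: "real^2 \<Rightarrow> real^3 \<Rightarrow> bool" where
  "iso_so3C x y \<longleftrightarrow> (\<exists>\<phi> :: real^6 \<Rightarrow> complex^3^3.
      linear \<phi> \<and> inj \<phi> \<and> range \<phi> = {A. transpose A = - A} \<and>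
      (\<forall>X Y. \<phi> (lie_bracket x y X Y) = \<phi> X ** \<phi> Y - \<phi> Y ** \<phi> X))"

end

theory Submission
  imports Defs
begin


definition cg :: "real^'n^'m \<Rightarrow> real^'n^'n \<Rightarrow> real^'m^'m" where
  "cg M P = (\<chi> i j. (\<Sum>k\<in>UNIV. \<Sum>l\<in>UNIV. M$i$k * P$k$l * M$j$l) /
       (\<Sum>i\<in>UNIV. \<Sum>k\<in>UNIV. \<Sum>l\<in>UNIV. M$i$k * P$k$l * M$i$l))"

lemma cg_num: fixes M :: "real^'n^'m"
  shows "(\<Sum>k\<in>UNIV. \<Sum>l\<in>UNIV. M$i$k * (x$k*x$l/s) * M$j$l) = (M *v x)$i * (M *v x)$j / s"
  by (simp add: matrix_vector_mult_def sum_product sum_divide_distrib mult_ac)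

lemma cg_numpt: fixes M :: "real^'n^'m"
  shows "(\<Sum>k\<in>UNIV. \<Sum>l\<in>UNIV. M$i$k * (pt x)$k$l * M$j$l) = (M *v x)$i * (M *v x)$j / (x\<bullet>x)"
  unfolding pt_def vec_lambda_beta by (rule cg_num)

lemma cg_denpt: fixes M :: "real^'n^'m"
  shows "(\<Sum>i\<in>UNIV. \<Sum>k\<in>UNIV. \<Sum>l\<in>UNIV. M$i$k * (pt x)$k$l * M$i$l) = ((M *v x) \<bullet> (M *v x)) / (x \<bullet> x)"
  unfolding cg_numpt by (simp add: inner_vec_def sum_divide_distrib)

lemma cg_den: fixes M :: "real^'n^'m" assumes "M *v x \<noteq> 0"
  shows "(\<Sum>i\<in>UNIV. \<Sum>k\<in>UNIV. \<Sum>l\<in>UNIV. M$i$k * (pt x)$k$l * M$i$l) \<noteq> 0"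
proof -
  have x0: "x \<noteq> 0" using assms by auto
  thus ?thesis unfolding cg_denpt using assms by simp
qed

lemma cg_pt: fixes M :: "real^'n^'m" assumes "M *v x \<noteq> 0"
  shows "cg M (pt x) = pt (M *v x)"
proof -
  have x0: "x \<noteq> 0" using assms by auto
  hence s: "x \<bullet> x > 0" by simp
  have m: "(M *v x) \<bullet> (M *v x) > 0" using assms by simp
  have d: "(\<Sum>i\<in>UNIV. (M *v x)$i * (M *v x)$i / (x\<bullet>x)) = ((M *v x) \<bullet> (M *v x)) / (x \<bullet> x)"
    by (simp add: inner_vec_def sum_divide_distrib)
  have n: "\<And>i j. (\<Sum>k\<in>UNIV. \<Sum>l\<in>UNIV. M$i$k * (pt x)$k$l * M$j$l) = (M *v x)$i * (M *v x)$j / (x\<bullet>x)"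
    unfolding pt_def vec_lambda_beta by (rule cg_num)
  have dd: "(\<Sum>i\<in>UNIV. \<Sum>k\<in>UNIV. \<Sum>l\<in>UNIV. M$i$k * (pt x)$k$l * M$i$l) = ((M *v x) \<bullet> (M *v x)) / (x \<bullet> x)"
    unfolding n d ..
  show ?thesis
    unfolding cg_def dd n using s m by (simp add: vec_eq_iff pt_def d)
qed

lemma cg_cont: fixes M :: "real^'n^'m"
  shows "continuous_on {P. (\<Sum>i\<in>UNIV. \<Sum>k\<in>UNIV. \<Sum>l\<in>UNIV. M$i$k * P$k$l * M$i$l) \<noteq> 0} (cg M)"
  unfolding cg_def by (intro continuous_intros) auto

lemma pt_cont: "continuous_on (- {0}) (pt :: real^'n \<Rightarrow> _)"
  unfolding pt_def by (intro continuous_intros) auto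


lemma pt_scale: fixes v :: "real^'n" assumes "c \<noteq> 0" shows "pt (c *\<^sub>R v) = pt v"
  using assms by (simp add: pt_def vec_eq_iff inner_scaleR_left inner_scaleR_right)


definition Am :: "real^2^3" where "Am = vector [vector [0,1], vector [1,0], vector [0,-1]]"
definition Bm :: "real^3^2" where "Bm = vector [vector [0,1,0], vector [1,0,0]]"

lemma Am_v: "Am *v x = vector [x$2, x$1, - x$2]"
  by (simp add: vec_eq_iff forall_3 matrix_vector_mult_def sum_2 Am_def)
lemma Bm_v: "Bm *v n = vector [n$2, n$1]"
  by (simp add: vec_eq_iff forall_2 matrix_vector_mult_def sum_3 Am_def Bm_def)

lemma inner3: "(a::real^3) \<bullet> b = a$1*b$1 + a$2*b$2 + a$3*b$3"
  by (simp add: inner_vec_def sum_3)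
lemma inner2: "(a::real^2) \<bullet> b = a$1*b$1 + a$2*b$2"
  by (simp add: inner_vec_def sum_2)
lemma vec2_eq: "(a::'a^2) = b \<longleftrightarrow> a$1 = b$1 \<and> a$2 = b$2"
  by (simp add: vec_eq_iff forall_2)
lemma vec3_eq: "(a::'a^3) = b \<longleftrightarrow> a$1 = b$1 \<and> a$2 = b$2 \<and> a$3 = b$3"
  by (simp add: vec_eq_iff forall_3)
lemma nz2: "(a::real^2) \<noteq> 0 \<longleftrightarrow> a$1 \<noteq> 0 \<or> a$2 \<noteq> 0"
  by (auto simp: vec2_eq)
lemma nz3: "(a::real^3) \<noteq> 0 \<longleftrightarrow> a$1 \<noteq> 0 \<or> a$2 \<noteq> 0 \<or> a$3 \<noteq> 0"
  by (auto simp: vec3_eq)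

lemma Am_inj: "inj (\<lambda>x. Am *v x)"
  by (auto simp: inj_def Am_v vec2_eq vec3_eq)

lemma Am_range: "range (\<lambda>x. Am *v x) = {n. n \<bullet> vector [1,0,1] = 0}"
proof
  show "range (\<lambda>x. Am *v x) \<subseteq> {n. n \<bullet> vector [1,0,1] = 0}"
    by (auto simp: Am_v inner3)
  show "{n. n \<bullet> vector [1,0,1] = 0} \<subseteq> range (\<lambda>x. Am *v x)"
  proof
    fix n :: "real^3" assume "n \<in> {n. n \<bullet> vector [1,0,1] = 0}"
    hence "n$1 + n$3 = 0" by (simp add: inner3)
    hence "n = Am *v (Bm *v n)" by (simp add: Am_v Bm_v vec3_eq)
    thus "n \<in> range (\<lambda>x. Am *v x)" by blast
  qed
qed

lemma pt_eq_p: fixes y :: "real^3" assumes "y \<noteq> 0"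
  shows "pt y = pt (vector [1,0,1]) \<longleftrightarrow> y$2 = 0 \<and> y$1 = y$3"
proof
  assume h: "pt y = pt (vector [1,0,1])"
  have s: "y \<bullet> y > 0" using assms by simp
  let ?s = "y \<bullet> y"
  have e: "\<And>i j. y$i * y$j / ?s = (vector [1,0,1] :: real^3)$i * (vector [1,0,1] :: real^3)$j / 2"
    using h by (simp add: pt_def vec_eq_iff inner3)
  from e[of 2 2] s have "y$2 * y$2 = 0" by simp
  hence 2: "y$2 = 0" by simp
  from e[of 1 1] e[of 1 3] e[of 3 3] s have "y$1*y$1 = y$1 * y$3" "y$3*y$3 = y$1*y$3"
    by (simp_all add: field_simps)
  hence "(y$1 - y$3)^2 = 0"
    by (metis (no_types, lifting) mult_right_cancel eq_iff_diff_eq_0 power2_eq_square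
          mult_cancel_left right_diff_distrib mult.commute)
  thus "y$2 = 0 \<and> y$1 = y$3" using 2 by simp
next
  assume h: "y$2 = 0 \<and> y$1 = y$3"
  hence "y = y$1 *\<^sub>R vector [1,0,1]" by (simp add: vec3_eq)
  moreover have "y$1 \<noteq> 0" using h assms by (auto simp: nz3)
  ultimately show "pt y = pt (vector [1,0,1])" by (metis pt_scale)
qed

lemma herm_iff: fixes x :: "real^2" and y :: "real^3" assumes "x \<noteq> 0"
  shows "hermitian x y \<longleftrightarrow> y$2 = 0 \<and> y$1 = y$3"
proof
  assume "hermitian x y"
  hence e1: "x$1 * y$2 + x$2 * (y$1 - y$3) = 0" and e2: "x$1 * (y$1 - y$3) - x$2 * y$2 = 0"
    by (auto simp: hermitian_def lam1_def lam2_def lam3_def lam4_def algebra_simps)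
  have q: "x$1^2 + x$2^2 > 0" using assms by (auto simp: nz2 add_pos_nonneg add_nonneg_pos)
  have "(x$1^2 + x$2^2) * y$2 = x$1 * (x$1 * y$2 + x$2 * (y$1 - y$3)) - x$2 * (x$1 * (y$1 - y$3) - x$2 * y$2)"
    by (simp add: power2_eq_square algebra_simps)
  also have "\<dots> = 0" by (metis e1 e2 mult_zero_right diff_zero add_0)
  finally have "(x$1^2 + x$2^2) * y$2 = 0" .
  hence a: "y$2 = 0" using q by (metis mult_eq_0_iff less_irrefl)
  have "(x$1^2 + x$2^2) * (y$1 - y$3) = x$2 * (x$1 * y$2 + x$2 * (y$1 - y$3)) + x$1 * (x$1 * (y$1 - y$3) - x$2 * y$2)"
    by (simp add: power2_eq_square algebra_simps)
  also have "\<dots> = 0" by (metis e1 e2 mult_zero_right diff_zero add_0)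
  finally have "(x$1^2 + x$2^2) * (y$1 - y$3) = 0" .
  hence "y$1 - y$3 = 0" using q by (metis mult_eq_0_iff less_irrefl)
  thus "y$2 = 0 \<and> y$1 = y$3" using a by simp
next
  assume "y$2 = 0 \<and> y$1 = y$3"
  thus "hermitian x y" by (simp add: hermitian_def lam1_def lam2_def lam3_def lam4_def)
qed



lemma Am_nz: "x \<noteq> 0 \<Longrightarrow> Am *v x \<noteq> 0"
  by (auto simp: Am_v nz2 nz3)
lemma BA: "Bm *v (Am *v x) = x" by (simp add: Am_v Bm_v vec2_eq)
lemma AB: "n \<bullet> vector [1,0,1] = 0 \<Longrightarrow> Am *v (Bm *v n) = n"
  by (simp add: Am_v Bm_v vec3_eq inner3)
lemma Bm_nz: "n \<noteq> 0 \<Longrightarrow> n \<bullet> vector [1,0,1] = 0 \<Longrightarrow> Bm *v n \<noteq> 0"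
  by (metis AB matrix_vector_mult_0_right)
lemma hf_cond: "(Am *v x) \<bullet> y = x$1 * y$2 + x$2 * (y$1 - y$3)"
  by (simp add: Am_v inner3 algebra_simps)
lemma Am_perp: "(Am *v x) \<bullet> vector [1,0,1] = 0"
  by (simp add: Am_v inner3)

lemma homeo: "homeomorphism halfflat_set (blowup (vector [1,0,1]))
   (\<lambda>z. (cg Am (fst z), snd z)) (\<lambda>z. (cg Bm (fst z), snd z))"
proof (rule homeomorphismI)
  show "continuous_on halfflat_set (\<lambda>z. (cg Am (fst z), snd z))"
  proof (intro continuous_on_Pair continuous_on_snd continuous_on_id)
    show "continuous_on halfflat_set (\<lambda>z. cg Am (fst z))"
      by (rule continuous_on_compose2[OF cg_cont continuous_on_fst])
         (use cg_den[OF Am_nz] in \<open>auto simp: halfflat_set_def\<close>)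
  qed
  show "continuous_on (blowup (vector [1,0,1])) (\<lambda>z. (cg Bm (fst z), snd z))"
  proof (intro continuous_on_Pair continuous_on_snd continuous_on_id)
    show "continuous_on (blowup (vector [1,0,1])) (\<lambda>z. cg Bm (fst z))"
      by (rule continuous_on_compose2[OF cg_cont continuous_on_fst])
         (use cg_den[OF Bm_nz] in \<open>auto simp: blowup_def\<close>)
  qed
  show "(\<lambda>z. (cg Am (fst z), snd z)) ` halfflat_set \<subseteq> blowup (vector [1,0,1])"
  proof clarify
    fix a b assume "(a, b) \<in> halfflat_set"
    then obtain x y where h: "a = pt x" "b = pt y" "x \<noteq> 0" "y \<noteq> 0" "x$1 * y$2 + x$2 * (y$1 - y$3) = 0"
      unfolding halfflat_set_def by auto
    have "(pt (Am *v x), pt y) \<in> blowup (vector [1,0,1])"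
      unfolding blowup_def mem_Collect_eq
      by (intro exI[of _ "Am *v x"] exI[of _ y]) (simp add: h Am_nz hf_cond Am_perp)
    thus "(cg Am (fst (a, b)), snd (a, b)) \<in> blowup (vector [1,0,1])"
      using h by (simp add: cg_pt Am_nz)
  qed
  show "(\<lambda>z. (cg Bm (fst z), snd z)) ` blowup (vector [1,0,1]) \<subseteq> halfflat_set"
  proof clarify
    fix a b assume "(a, b) \<in> blowup (vector [1,0,1])"
    then obtain n q where h: "a = pt n" "b = pt q" "n \<noteq> 0" "q \<noteq> 0" "n \<bullet> vector [1,0,1] = 0" "n \<bullet> q = 0"
      unfolding blowup_def by auto
    have "cg Bm a = pt (Bm *v n)" using h by (simp add: cg_pt Bm_nz)
    moreover have "(Bm *v n)$1 * q$2 + (Bm *v n)$2 * (q$1 - q$3) = 0"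
      using h hf_cond[of "Bm *v n" q] AB[of n] by simp
    ultimately show "(cg Bm (fst (a, b)), snd (a, b)) \<in> halfflat_set"
      unfolding halfflat_set_def using h Bm_nz by auto
  qed
  show "(cg Bm (fst (cg Am (fst z), snd z)), snd (cg Am (fst z), snd z)) = z" if "z \<in> halfflat_set" for z
    using that by (auto simp: halfflat_set_def cg_pt Am_nz BA)
  show "(cg Am (fst (cg Bm (fst z), snd z)), snd (cg Bm (fst z), snd z)) = z" if "z \<in> blowup (vector [1,0,1])" for z
    using that by (auto simp: blowup_def cg_pt Bm_nz AB)
qed

definition vv :: "real^2 \<Rightarrow> real^3" where
  "vv x = x$1 *\<^sub>R vector [1,0,-1] + x$2 *\<^sub>R vector [0,-2,0]"
definition gy :: "(real^2) \<times> (real^2) \<Rightarrow> real^3" where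
  "gy z = (snd z)$1 *\<^sub>R vector [1,0,1] + (snd z)$2 *\<^sub>R vv (fst z)"

lemma gy_nz: "fst z \<noteq> 0 \<Longrightarrow> snd z \<noteq> 0 \<Longrightarrow> gy z \<noteq> 0"
proof -
  obtain x w where z: "z = (x, w)" by fastforce
  assume "fst z \<noteq> 0" "snd z \<noteq> 0"
  hence x: "x \<noteq> 0" and w: "w \<noteq> 0" using z by auto
  show "gy z \<noteq> 0"
  proof
    assume "gy z = 0"
    hence e: "w$1 + w$2 * x$1 = 0" "w$2 * x$2 = 0" "w$1 - w$2*x$1 = 0"
      by (auto simp: gy_def vv_def z vec3_eq)
    have "2 * (w$2 * x$1) = (w$1 + w$2 * x$1) - (w$1 - w$2*x$1)" by simp
    hence a: "w$2 * x$1 = 0" using e(1,3) by simp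
    hence "w$1 = 0" using e(1) by (metis add.right_neutral)
    moreover have "w$2 = 0" using a e(2) x by (auto simp: nz2)
    ultimately show False using w by (simp add: vec2_eq)
  qed
qed

lemma connected_hf: "connected halfflat_set"
proof -
  let ?D = "(- {0::real^2}) \<times> (- {0::real^2})"
  let ?f = "\<lambda>z. (pt (fst z), pt (gy z))"
  have eq: "halfflat_set = ?f ` ?D"
  proof
    show "?f ` ?D \<subseteq> halfflat_set"
    proof (rule image_subsetI)
      fix z assume "z \<in> ?D"
      then obtain x w where xw: "z = (x,w)" "x \<noteq> 0" "w \<noteq> 0" by auto
      hence "x \<noteq> 0" "w \<noteq> 0" by auto
      moreover have "x$1 * (gy (x,w))$2 + x$2 * ((gy (x,w))$1 - (gy (x,w))$3) = 0"
        by (simp add: gy_def vv_def algebra_simps)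
      ultimately show "?f z \<in> halfflat_set" unfolding xw
        unfolding halfflat_set_def using gy_nz[of "(x,w)"] by auto
    qed
    show "halfflat_set \<subseteq> ?f ` ?D"
    proof
      fix z assume "z \<in> halfflat_set"
      then obtain x y where h: "z = (pt x, pt y)" "x \<noteq> 0" "y \<noteq> 0" "x$1 * y$2 + x$2 * (y$1 - y$3) = 0"
        unfolding halfflat_set_def by auto
      define D where "D = x$1^2 + 4 * x$2^2"
      have D: "D > 0" using h(2) by (auto simp: D_def nz2 add_pos_nonneg add_nonneg_pos)
      define w :: "real^2" where "w = vector [(y$1 + y$3)/2, (x$1 * (y$1 - y$3)/2 - 2 * x$2 * y$2) / D]"
      have c1: "w$2 * x$1 = (y$1 - y$3)/2"
      proof -
        have "(x$1 * (y$1 - y$3)/2 - 2 * x$2 * y$2) * x$1 - (y$1 - y$3)/2 * D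
              = -2 * x$2 * (x$1 * y$2 + x$2 * (y$1 - y$3))"
          unfolding D_def by (simp add: power2_eq_square field_simps)
        hence "(x$1 * (y$1 - y$3)/2 - 2 * x$2 * y$2) * x$1 = (y$1 - y$3)/2 * D"
          using h(4) by simp
        thus ?thesis using D by (simp add: w_def field_simps)
      qed
      have c2: "w$2 * x$2 = - y$2/2"
      proof -
        have "(x$1 * (y$1 - y$3)/2 - 2 * x$2 * y$2) * x$2 - (- y$2/2 * D)
              = x$1/2 * (x$1 * y$2 + x$2 * (y$1 - y$3))"
          unfolding D_def by (simp add: power2_eq_square field_simps)
        hence "(x$1 * (y$1 - y$3)/2 - 2 * x$2 * y$2) * x$2 = - y$2/2 * D"
          using h(4) by simp
        thus ?thesis using D by (simp add: w_def field_simps)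
      qed
      have y: "y = gy (x, w)"
        using c1 c2 by (simp add: gy_def vv_def vec3_eq algebra_simps) (simp add: w_def field_simps)
      hence "w \<noteq> 0" using h(3) by (auto simp: gy_def)
      thus "z \<in> ?f ` ?D" using h y by force
    qed
  qed
  have conn: "connected ?D"
    by (intro connected_Times connected_punctured_universe) auto
  have cont: "continuous_on ?D ?f"
  proof (intro continuous_on_Pair)
    show "continuous_on ?D (\<lambda>z. pt (fst z))"
      by (rule continuous_on_compose2[OF pt_cont continuous_on_fst]) auto
    have "continuous_on ?D gy" unfolding gy_def vv_def by (intro continuous_intros)
    moreover have "gy ` ?D \<subseteq> - {0}"
    proof
      fix z assume "z \<in> gy ` ?D"
      then obtain u where u: "u \<in> ?D" "z = gy u" by blast
      then show "z \<in> - {0}" using gy_nz[of u] by (cases u) auto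
    qed
    ultimately show "continuous_on ?D (\<lambda>z. pt (gy z))"
      by (rule continuous_on_compose2[OF pt_cont])
  qed
  show ?thesis unfolding eq by (rule connected_continuous_image[OF cont conn])
qed



lemma UNIV_6: "{1,2,3,4,5,6::6} = UNIV"
  by (rule card_subset_eq) simp_all

lemma exhaust_6: fixes i :: 6 shows "i = 1 \<or> i = 2 \<or> i = 3 \<or> i = 4 \<or> i = 5 \<or> i = 6"
proof -
  have "i \<in> {1,2,3,4,5,6::6}" unfolding UNIV_6 by simp
  thus ?thesis by simp
qed

definition hatm :: "complex \<Rightarrow> complex \<Rightarrow> complex \<Rightarrow> complex^3^3" where
  "hatm a1 a2 a3 = vector [vector [0, -a3, a2], vector [a3, 0, -a1], vector [-a2, a1, 0]]"

lemma hat_comm: "hatm a1 a2 a3 ** hatm b1 b2 b3 - hatm b1 b2 b3 ** hatm a1 a2 a3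
   = hatm (a2*b3-a3*b2) (a3*b1-a1*b3) (a1*b2-a2*b1)"
  by (simp add: vec_eq_iff forall_3 matrix_matrix_mult_def sum_3 hatm_def algebra_simps)

lemma hatm_add: "hatm a1 a2 a3 + hatm b1 b2 b3 = hatm (a1+b1) (a2+b2) (a3+b3)"
  by (simp add: vec_eq_iff forall_3 hatm_def)
lemma hatm_scale: "r *\<^sub>R hatm a1 a2 a3 = hatm (r *\<^sub>R a1) (r *\<^sub>R a2) (r *\<^sub>R a3)"
  by (simp add: vec_eq_iff forall_3 hatm_def)
lemma hatm_inj: "hatm a1 a2 a3 = hatm b1 b2 b3 \<Longrightarrow> a1 = b1 \<and> a2 = b2 \<and> a3 = b3"
  by (simp add: vec_eq_iff forall_3 hatm_def)
lemma hatm_skew: "transpose (hatm a1 a2 a3) = - hatm a1 a2 a3"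
  by (simp add: vec_eq_iff forall_3 hatm_def transpose_def)
lemma skew_hatm: fixes A :: "complex^3^3" assumes "transpose A = - A"
  shows "A = hatm (A$3$2) (A$1$3) (A$2$1)"
proof -
  have e: "A$j$i = - A$i$j" for i j
  proof -
    have "(transpose A)$i$j = (-A)$i$j" by (simp only: assms)
    thus ?thesis by (simp add: transpose_def)
  qed
  have d: "A$i$i = 0" for i
  proof -
    have h: "A$i$i = - A$i$i" by (rule e)
    have "A$i$i + A$i$i = 0" by (subst (2) h) simp
    thus ?thesis by simp
  qed
  show ?thesis using e[of 1 2] e[of 1 3] e[of 2 3] d
    by (simp add: vec_eq_iff forall_3 hatm_def)
qed

definition Z1 :: "real^6 \<Rightarrow> complex" where "Z1 X = Complex (X$1) (X$2)"
definition Z2 :: "real^6 \<Rightarrow> complex" where "Z2 X = Complex (X$3) (X$4)"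
definition Z3 :: "real^6 \<Rightarrow> complex" where "Z3 X = Complex (X$5) (X$6)"

lemma Z_add: "Z1 (X+Y) = Z1 X + Z1 Y" "Z2 (X+Y) = Z2 X + Z2 Y" "Z3 (X+Y) = Z3 X + Z3 Y"
  by (simp_all add: Z1_def Z2_def Z3_def complex_eq_iff)
lemma Z_scale: "Z1 (r *\<^sub>R X) = r *\<^sub>R Z1 X" "Z2 (r *\<^sub>R X) = r *\<^sub>R Z2 X" "Z3 (r *\<^sub>R X) = r *\<^sub>R Z3 X"
  by (simp_all add: Z1_def Z2_def Z3_def complex_eq_iff)
lemma Z_neg: "Z1 (- X) = - Z1 X" "Z2 (- X) = - Z2 X" "Z3 (- X) = - Z3 X"
  by (simp_all add: Z1_def Z2_def Z3_def complex_eq_iff)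
lemma Z_inj: "Z1 X = Z1 Y \<Longrightarrow> Z2 X = Z2 Y \<Longrightarrow> Z3 X = Z3 Y \<Longrightarrow> X = Y"
proof -
  assume "Z1 X = Z1 Y" "Z2 X = Z2 Y" "Z3 X = Z3 Y"
  hence e: "X$1 = Y$1" "X$2 = Y$2" "X$3 = Y$3" "X$4 = Y$4" "X$5 = Y$5" "X$6 = Y$6"
    by (simp_all add: Z1_def Z2_def Z3_def)
  show "X = Y" unfolding vec_eq_iff
  proof
    fix i :: 6 show "X$i = Y$i" using exhaust_6[of i] e by auto
  qed
qed

lemma dE_Z:
  assumes "y$2 = 0" "y$1 = c" "y$3 = c"
  shows "Z1 (dE x y X Y) = of_real c * Complex (x$2) (x$1) * (Z2 X * Z3 Y - Z3 X * Z2 Y)"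
    "Z2 (dE x y X Y) = of_real c * Complex (x$2) (x$1) * (Z3 X * Z1 Y - Z1 X * Z3 Y)"
    "Z3 (dE x y X Y) = of_real c * Complex (x$2) (x$1) * (Z1 X * Z2 Y - Z2 X * Z1 Y)"
  using assms
  by (simp_all add: Z1_def Z2_def Z3_def complex_eq_iff dE_def Let_def w2_def algebra_simps)

lemma iso_part: fixes x :: "real^2" and y :: "real^3"
  assumes x: "x \<noteq> 0" and y: "y$2 = 0" "y$1 = c" "y$3 = c" and c: "c \<noteq> 0"
  shows "iso_so3C x y"
proof -
  define k where "k = - (of_real c * Complex (x$2) (x$1))"
  have k: "k \<noteq> 0" using x c by (auto simp: k_def complex_eq_iff vec_eq_iff forall_2)
  define \<phi> where "\<phi> X = hatm (k * Z1 X) (k * Z2 X) (k * Z3 X)" for X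
  have lin: "linear \<phi>"
    by (rule linearI) (simp_all add: \<phi>_def Z_add Z_scale hatm_add hatm_scale distrib_left mult_scaleR_right)
  have inj: "inj \<phi>"
  proof (rule injI)
    fix X Y assume "\<phi> X = \<phi> Y"
    hence "k * Z1 X = k * Z1 Y \<and> k * Z2 X = k * Z2 Y \<and> k * Z3 X = k * Z3 Y"
      unfolding \<phi>_def by (rule hatm_inj)
    thus "X = Y" using k by (intro Z_inj) auto
  qed
  have rng: "range \<phi> = {A. transpose A = - A}"
  proof
    show "range \<phi> \<subseteq> {A. transpose A = - A}" by (auto simp: \<phi>_def hatm_skew)
    show "{A. transpose A = - A} \<subseteq> range \<phi>"
    proof
      fix A :: "complex^3^3" assume "A \<in> {A. transpose A = - A}"
      hence A: "A = hatm (A$3$2) (A$1$3) (A$2$1)" by (intro skew_hatm) simp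
      define u1 where "u1 = A$3$2 / k"
      define u2 where "u2 = A$1$3 / k"
      define u3 where "u3 = A$2$1 / k"
      define X :: "real^6" where "X = (\<chi> i. if i = 1 then Re u1 else if i = 2 then Im u1
          else if i = 3 then Re u2 else if i = 4 then Im u2 else if i = 5 then Re u3 else Im u3)"
      have "Z1 X = u1" "Z2 X = u2" "Z3 X = u3" by (simp_all add: X_def Z1_def Z2_def Z3_def complex_eq_iff)
      hence "\<phi> X = hatm (A$3$2) (A$1$3) (A$2$1)" using k by (simp add: \<phi>_def u1_def u2_def u3_def)
      hence "\<phi> X = A" using A[symmetric] by (rule trans)
      thus "A \<in> range \<phi>" by (metis rangeI)
    qed
  qed
  have br: "\<phi> (lie_bracket x y X Y) = \<phi> X ** \<phi> Y - \<phi> Y ** \<phi> X" for X Y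
  proof -
    have "\<phi> X ** \<phi> Y - \<phi> Y ** \<phi> X = hatm (k*Z2 X * (k*Z3 Y) - k*Z3 X * (k*Z2 Y))
         (k*Z3 X * (k*Z1 Y) - k*Z1 X * (k*Z3 Y)) (k*Z1 X * (k*Z2 Y) - k*Z2 X * (k*Z1 Y))"
      unfolding \<phi>_def hat_comm ..
    also have "\<dots> = \<phi> (lie_bracket x y X Y)"
      unfolding \<phi>_def lie_bracket_def Z_neg dE_Z[OF y]
      by (simp add: k_def algebra_simps)
    finally show ?thesis ..
  qed
  show ?thesis unfolding iso_so3C_def
    by (intro exI[of _ \<phi>] conjI allI lin inj rng br)
qed


theorem proposition3p18:
  fixes p :: "real^3"
  assumes p_def: "p = vector [1, 0, 1]"
  shows
    \<comment> \<open>via projection onto the second factor, the half-flat set is the blow-up of RP^2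
        at [1:0:1]: a homeomorphism over RP^2, induced on the RP^1 factor by a linear
        isomorphism of R^2 onto p^perp (RP^1 = the pencil of lines through [p])\<close>
    "(\<exists>\<Phi> \<Psi> (A :: real^2 \<Rightarrow> real^3).
        homeomorphism halfflat_set (blowup p) \<Phi> \<Psi> \<and>
        (\<forall>z\<in>halfflat_set. snd (\<Phi> z) = snd z) \<and>
        linear A \<and> inj A \<and> range A = {n. n \<bullet> p = 0} \<and>
        (\<forall>x y. x \<noteq> 0 \<longrightarrow> y \<noteq> 0 \<longrightarrow> (pt x, pt y) \<in> halfflat_set \<longrightarrow>
            \<Phi> (pt x, pt y) = (pt (A x), pt y)))
     \<and> connected halfflat_set
     \<and> (\<forall>x y. x \<noteq> 0 \<longrightarrow> y \<noteq> 0 \<longrightarrow> (hermitian x y \<longleftrightarrow> pt y = pt p))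
     \<and> (\<forall>x y. x \<noteq> 0 \<longrightarrow> y \<noteq> 0 \<longrightarrow> pt y = pt p \<longrightarrow> iso_so3C x y)"
proof (intro conjI)
  show "\<exists>\<Phi> \<Psi> (A :: real^2 \<Rightarrow> real^3).
        homeomorphism halfflat_set (blowup p) \<Phi> \<Psi> \<and>
        (\<forall>z\<in>halfflat_set. snd (\<Phi> z) = snd z) \<and>
        linear A \<and> inj A \<and> range A = {n. n \<bullet> p = 0} \<and>
        (\<forall>x y. x \<noteq> 0 \<longrightarrow> y \<noteq> 0 \<longrightarrow> (pt x, pt y) \<in> halfflat_set \<longrightarrow>
            \<Phi> (pt x, pt y) = (pt (A x), pt y))"
    unfolding p_def
    apply (rule exI[of _ "\<lambda>z. (cg Am (fst z), snd z)"])
    apply (rule exI[of _ "\<lambda>z. (cg Bm (fst z), snd z)"])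
    apply (rule exI[of _ "\<lambda>x. Am *v x"])
    apply (intro conjI homeo Am_inj Am_range matrix_vector_mul_linear)
     apply simp
    apply (simp add: cg_pt Am_nz)
    done
  show "connected halfflat_set" by (rule connected_hf)
  show "\<forall>x y. x \<noteq> 0 \<longrightarrow> y \<noteq> 0 \<longrightarrow> (hermitian x y \<longleftrightarrow> pt y = pt p)"
  proof (intro allI impI)
    fix x :: "real^2" and y :: "real^3"
    assume x: "x \<noteq> 0" and y: "y \<noteq> 0"
    show "hermitian x y \<longleftrightarrow> pt y = pt p"
      unfolding p_def herm_iff[OF x] pt_eq_p[OF y] ..
  qed
  show "\<forall>x y. x \<noteq> 0 \<longrightarrow> y \<noteq> 0 \<longrightarrow> pt y = pt p \<longrightarrow> iso_so3C x y"
  proof (intro allI impI)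
    fix x :: "real^2" and y :: "real^3"
    assume h: "x \<noteq> 0" "y \<noteq> 0" "pt y = pt p"
    have "pt y = pt (vector [1,0,1])" using h(3) p_def by simp
    hence e: "y$2 = 0" "y$1 = y$3" using pt_eq_p[OF h(2)] by simp_all
    have c: "y$1 \<noteq> 0"
    proof
      assume "y$1 = 0"
      hence "y$1 = 0" "y$2 = 0" "y$3 = 0" using e by simp_all
      thus False using h(2) nz3[of y] by blast
    qed
    show "iso_so3C x y" by (rule iso_part[OF h(1) e(1) refl e(2)[symmetric] c])
  qed
qed

end
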